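(* Let $M_0>0$, $r\in(0,+\infty]$, $\varphi,\tilde\varphi\in\mathrm{Lip}_\alpha$ and $\tau_0,\tilde\tau_0\in C_+(\Omega)$ with $\|\varphi\|_{\mathrm{Lip}_\alpha}+\|\tau_0\|_\infty\le M_0$ and $\|\tilde\varphi\|_{\mathrm{Lip}_\alpha}+\|\tilde\tau_0\|_\infty\le M_0$. Let $A,\tilde A\in C((-\infty,r),C(\Omega))$ with $A=\varphi$, $\tilde A=\tilde\varphi$ on $(-\infty,0]\times\Omega$, and assume $M:=\max\{\sup_{t\in[0,r)}\|A(t,\cdot)\|_\infty,\sup_{t\in[0,r)}\|\tilde A(t,\cdot)\|_\infty\}<+\infty$. Let $\delta_0(x)=\int_{-\tau_0(x)}^0f(\varphi(s,\cdot))(x)ds$, $\tilde\delta_0(x)=\int_{-\tilde\tau_0(x)}^0f(\tilde\varphi(s,\cdot))(x)ds$, and $\bar\tau_0^\infty:=\max\{\sup_x\tau_0(x),\sup_x\tilde\tau_0(x)\}$. Then there exists a constant $L_\tau>0$ (depending only on $M_0$, $M$, $\alpha$ and $f$) such that for all $t\in[0,r)$ and $x\in\Omega$, $$|\widehat\tau(A_t,\delta_0)(x)-\widehat\tau(\tilde A_t,\tilde\delta_0)(x)|\le L_\tau\Big[\sup_{s\in[-\bar\tau_0^\infty,r)}\|A(s,\cdot)-\tilde A(s,\cdot)\|_\infty+\|\delta_0-\tilde\delta_0\|_\infty\Big].$$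
   Context: $\Omega\subset\mathbb R^n$ compact, $C(\Omega)$ with sup norm, $\alpha\ge0$ fixed. $f:C(\Omega)\to C(\Omega)$ is Lipschitz, $0<f(\phi)(x)\le M_f$ for a constant $M_f$, non-increasing for the pointwise order. $\mathrm{Lip}_\alpha$ is the space of $\phi\in C((-\infty,0],C(\Omega))$ such that $\phi_\alpha(t):=e^{-\alpha|t|}\phi(t,\cdot)$ is bounded and Lipschitz, with norm $\sup_{t\le0}\|\phi_\alpha(t)\|_\infty+\sup_{t\ne s}\|\phi_\alpha(t)-\phi_\alpha(s)\|_\infty/|t-s|$. $A_t(\theta):=A(t+\theta)$ for $\theta\le 0$. For $t\in[0,r)$, $\widehat\tau(A_t,\delta_0)(x)$ denotes the unique nonnegative number $\sigma$ with $\int_{-\sigma}^0f(A_t(s,\cdot))(x)ds=\delta_0(x)$, equivalently $\int_{t-\sigma}^tf(A(s,\cdot))(x)ds=\int_{-\tau_0(x)}^0f(\varphi(s,\cdot))(x)ds$ (and similarly for $\tilde A,\tilde\delta_0$). *)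

theory Defs
  imports "HOL-Analysis.Analysis" "HOL-Library.Extended_Real"
begin

text \<open>Elements of C(Omega) are represented as functions on the ambient space;
only their values on Omega matter.\<close>

definition supnorm :: "'a set \<Rightarrow> ('a \<Rightarrow> real) \<Rightarrow> real" where
  "supnorm \<Omega> g = (SUP x\<in>\<Omega>. \<bar>g x\<bar>)"

definition cont_C :: "'a::topological_space set \<Rightarrow> real set \<Rightarrow> (real \<Rightarrow> 'a \<Rightarrow> real) \<Rightarrow> bool" where
  "cont_C \<Omega> T A \<longleftrightarrow>
     (\<forall>t\<in>T. continuous_on \<Omega> (A t)) \<and>
     (\<forall>t\<in>T. \<forall>\<epsilon>>0. \<exists>\<delta>>0. \<forall>s\<in>T. \<bar>s - t\<bar> < \<delta> \<longrightarrow>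
        supnorm \<Omega> (\<lambda>x. A s x - A t x) < \<epsilon>)"

definition weighted :: "real \<Rightarrow> (real \<Rightarrow> 'a \<Rightarrow> real) \<Rightarrow> real \<Rightarrow> 'a \<Rightarrow> real" where
  "weighted \<alpha> \<phi> t = (\<lambda>x. exp (- \<alpha> * \<bar>t\<bar>) * \<phi> t x)"

definition in_Lip_alpha :: "'a::topological_space set \<Rightarrow> real \<Rightarrow> (real \<Rightarrow> 'a \<Rightarrow> real) \<Rightarrow> bool" where
  "in_Lip_alpha \<Omega> \<alpha> \<phi> \<longleftrightarrow>
     cont_C \<Omega> {..0} \<phi> \<and>
     bdd_above ((\<lambda>t. supnorm \<Omega> (weighted \<alpha> \<phi> t)) ` {..0}) \<and>
     (\<exists>K. \<forall>t\<le>0. \<forall>s\<le>0.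
        supnorm \<Omega> (\<lambda>x. weighted \<alpha> \<phi> t x - weighted \<alpha> \<phi> s x) \<le> K * \<bar>t - s\<bar>)"

definition Lip_alpha_norm :: "'a set \<Rightarrow> real \<Rightarrow> (real \<Rightarrow> 'a \<Rightarrow> real) \<Rightarrow> real" where
  "Lip_alpha_norm \<Omega> \<alpha> \<phi> =
     (SUP t\<in>{..0}. supnorm \<Omega> (weighted \<alpha> \<phi> t)) +
     (SUP p\<in>{(t, s). t \<le> 0 \<and> s \<le> 0 \<and> t \<noteq> s}.
        supnorm \<Omega> (\<lambda>x. weighted \<alpha> \<phi> (fst p) x - weighted \<alpha> \<phi> (snd p) x)
          / \<bar>fst p - snd p\<bar>)"

definition seg :: "(real \<Rightarrow> 'a \<Rightarrow> real) \<Rightarrow> real \<Rightarrow> real \<Rightarrow> 'a \<Rightarrow> real" where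
  "seg A t = (\<lambda>\<theta>. A (t + \<theta>))"

definition hat_tau :: "(('a \<Rightarrow> real) \<Rightarrow> ('a \<Rightarrow> real)) \<Rightarrow> (real \<Rightarrow> 'a \<Rightarrow> real)
                        \<Rightarrow> ('a \<Rightarrow> real) \<Rightarrow> 'a \<Rightarrow> real" where
  "hat_tau f \<Psi> \<delta> x = (THE \<sigma>. 0 \<le> \<sigma> \<and> integral {-\<sigma>..0} (\<lambda>s. f (\<Psi> s) x) = \<delta> x)"

definition admissible_f :: "'a::topological_space set \<Rightarrow> (('a \<Rightarrow> real) \<Rightarrow> ('a \<Rightarrow> real)) \<Rightarrow> bool" where
  "admissible_f \<Omega> f \<longleftrightarrow>
     (\<forall>\<phi>. continuous_on \<Omega> \<phi> \<longrightarrow> continuous_on \<Omega> (f \<phi>)) \<and>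
     (\<exists>K. \<forall>\<phi> \<psi>. continuous_on \<Omega> \<phi> \<longrightarrow> continuous_on \<Omega> \<psi> \<longrightarrow>
        supnorm \<Omega> (\<lambda>x. f \<phi> x - f \<psi> x) \<le> K * supnorm \<Omega> (\<lambda>x. \<phi> x - \<psi> x)) \<and>
     (\<exists>Mf. \<forall>\<phi>. continuous_on \<Omega> \<phi> \<longrightarrow> (\<forall>x\<in>\<Omega>. 0 < f \<phi> x \<and> f \<phi> x \<le> Mf)) \<and>
     (\<forall>\<phi> \<psi>. continuous_on \<Omega> \<phi> \<longrightarrow> continuous_on \<Omega> \<psi> \<longrightarrow>
        (\<forall>x\<in>\<Omega>. \<phi> x \<le> \<psi> x) \<longrightarrow> (\<forall>x\<in>\<Omega>. f \<psi> x \<le> f \<phi> x))"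

end

theory Submission
  imports Defs
begin


lemma int_lower:
  fixes g :: "real \<Rightarrow> real"
  assumes "g integrable_on {a..b}" "a \<le> b" "\<And>u. u \<in> {a..b} \<Longrightarrow> m \<le> g u"
  shows "m * (b - a) \<le> integral {a..b} g"
proof -
  have "integral {a..b} (\<lambda>_. m) \<le> integral {a..b} g"
    by (rule integral_le) (use assms in auto)
  thus ?thesis using assms(2) by (simp add: mult.commute)
qed

lemma int_upper:
  fixes g :: "real \<Rightarrow> real"
  assumes "g integrable_on {a..b}" "a \<le> b" "\<And>u. u \<in> {a..b} \<Longrightarrow> g u \<le> m"
  shows "integral {a..b} g \<le> m * (b - a)"
proof -
  have "integral {a..b} g \<le> integral {a..b} (\<lambda>_. m)"
    by (rule integral_le) (use assms in auto)
  thus ?thesis using assms(2) by (simp add: mult.commute)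
qed

lemma int_pos:
  fixes g :: "real \<Rightarrow> real"
  assumes "continuous_on {a..b} g" "a < b" "\<And>u. u \<in> {a..b} \<Longrightarrow> 0 < g u"
  shows "0 < integral {a..b} g"
proof -
  obtain u where u: "u \<in> {a..b}" "\<And>v. v \<in> {a..b} \<Longrightarrow> g u \<le> g v"
    using compact_attains_inf[of "g ` {a..b}"] assms
    by (metis compact_Icc compact_continuous_image atLeastAtMost_iff empty_iff image_iff
        less_eq_real_def)
  have "g u * (b - a) \<le> integral {a..b} g"
    by (rule int_lower) (use assms u integrable_continuous_real in auto)
  moreover have "0 < g u * (b - a)" using assms u by auto
  ultimately show ?thesis by linarith
qed

lemma uniq_sigma:
  fixes g :: "real \<Rightarrow> real"
  assumes c: "continuous_on {..t} g" and p: "\<And>u. u \<le> t \<Longrightarrow> 0 < g u"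
    and "0 \<le> s1" "0 \<le> s2" "integral {t-s1..t} g = integral {t-s2..t} g"
  shows "s1 = s2"
proof -
  have *: False if "0 \<le> s1" "s1 < s2" "integral {t-s1..t} g = integral {t-s2..t} g" for s1 s2
  proof -
    have ci: "continuous_on {t-s2..t} g" using c by (rule continuous_on_subset) auto
    have "integral {t-s2..t-s1} g + integral {t-s1..t} g = integral {t-s2..t} g"
      by (rule Henstock_Kurzweil_Integration.integral_combine) (use that ci integrable_continuous_real in auto)
    moreover have "0 < integral {t-s2..t-s1} g"
      by (rule int_pos) (use that p in \<open>auto intro: continuous_on_subset[OF ci]\<close>)
    ultimately show False using that by linarith
  qed
  show ?thesis using *[of s1 s2] *[of s2 s1] assms by (metis linorder_neqE_linordered_idom)
qed

lemma exist_sigma: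
  fixes g :: "real \<Rightarrow> real"
  assumes c: "continuous_on {..t} g"
    and "a \<le> t" "0 \<le> d" "d \<le> integral {a..t} g"
  shows "\<exists>\<sigma>. 0 \<le> \<sigma> \<and> \<sigma> \<le> t - a \<and> integral {t-\<sigma>..t} g = d"
proof -
  have ci: "continuous_on {a..t} g" using c by (rule continuous_on_subset) auto
  have "continuous_on {a..t} (\<lambda>v. integral {v..t} g)"
    by (rule indefinite_integral_continuous_1') (use ci integrable_continuous_real in auto)
  then obtain v where "a \<le> v" "v \<le> t" "integral {v..t} g = d"
    using IVT2'[of "\<lambda>v. integral {v..t} g" t d a] assms by auto
  thus ?thesis by (intro exI[of _ "t - v"]) auto
qed

lemma the_sigma:
  fixes g :: "real \<Rightarrow> real"
  assumes c: "continuous_on {..t} g" and p: "\<And>u. u \<le> t \<Longrightarrow> 0 < g u"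
    and "0 \<le> \<sigma>" "integral {t-\<sigma>..t} g = d"
  shows "(THE \<sigma>. 0 \<le> \<sigma> \<and> integral {t-\<sigma>..t} g = d) = \<sigma>"
  using assms uniq_sigma[OF c p] by (intro the_equality) auto

lemma est_ordered:
  fixes g g' :: "real \<Rightarrow> real"
  assumes "0 \<le> s'" "s' \<le> s"
    and ci: "continuous_on {t-s..t} g" and ci': "continuous_on {t-s'..t} g'"
    and "integral {t-s..t} g = d" "integral {t-s'..t} g' = d'"
    and m: "\<And>u. u \<in> {t-s..t} \<Longrightarrow> m \<le> g u"
    and E: "\<And>u. u \<in> {t-s'..t} \<Longrightarrow> \<bar>g u - g' u\<bar> \<le> E"
  shows "m * (s - s') \<le> (d - d') + E * s'"
proof -
  have gi: "g integrable_on {t-s..t}" using ci integrable_continuous_real by auto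
  have gi2: "g integrable_on {t-s'..t}" 
    by (rule integrable_continuous_real, rule continuous_on_subset[OF ci]) (use assms in auto)
  have gi1: "g integrable_on {t-s..t-s'}" 
    by (rule integrable_continuous_real, rule continuous_on_subset[OF ci]) (use assms in auto)
  have g'i: "g' integrable_on {t-s'..t}" using ci' integrable_continuous_real by auto
  have "integral {t-s..t-s'} g + integral {t-s'..t} g = integral {t-s..t} g"
    by (rule Henstock_Kurzweil_Integration.integral_combine) (use assms gi in auto)
  moreover have "m * ((t-s') - (t-s)) \<le> integral {t-s..t-s'} g"
    by (rule int_lower[OF gi1]) (use assms in auto)
  moreover have "integral {t-s'..t} (\<lambda>u. g' u - E) \<le> integral {t-s'..t} g"
  proof (rule integral_le)
    show "(\<lambda>u. g' u - E) integrable_on {t-s'..t}" using g'i by (intro integrable_diff) auto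
    show "g integrable_on {t-s'..t}" by (rule gi2)
    fix u assume "u \<in> {t-s'..t}" then show "g' u - E \<le> g u" using E[of u] by auto
  qed
  moreover have "integral {t-s'..t} (\<lambda>u. g' u - E) = d' - E * s'"
  proof -
    have "integral {t-s'..t} (\<lambda>u. g' u - E) = integral {t-s'..t} g' - integral {t-s'..t} (\<lambda>u. E)"
      by (rule integral_diff) (use g'i in auto)
    then show ?thesis using assms by (simp add: mult.commute)
  qed
  ultimately show ?thesis using assms by (auto simp: algebra_simps)
qed



lemma sn_ge:
  fixes g :: "'a::topological_space \<Rightarrow> real"
  assumes "compact \<Omega>" "continuous_on \<Omega> g" "x \<in> \<Omega>"
  shows "\<bar>g x\<bar> \<le> supnorm \<Omega> g"
proof -
  have "continuous_on \<Omega> (\<lambda>x. \<bar>g x\<bar>)" using assms(2) by (intro continuous_intros)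
  then have "compact ((\<lambda>x. \<bar>g x\<bar>) ` \<Omega>)" using assms(1) by (rule compact_continuous_image)
  then have "bdd_above ((\<lambda>x. \<bar>g x\<bar>) ` \<Omega>)" by (intro bounded_imp_bdd_above compact_imp_bounded)
  then show ?thesis unfolding supnorm_def using assms(3) by (rule cSUP_upper2) auto
qed

lemma sn_nonneg:
  fixes g :: "'a::topological_space \<Rightarrow> real"
  assumes "compact \<Omega>" "continuous_on \<Omega> g" "x \<in> \<Omega>"
  shows "0 \<le> supnorm \<Omega> g"
  using sn_ge[OF assms] by linarith

lemma sn_le:
  assumes "\<Omega> \<noteq> {}" "\<And>x. x \<in> \<Omega> \<Longrightarrow> \<bar>g x\<bar> \<le> B"
  shows "supnorm \<Omega> g \<le> B"
  unfolding supnorm_def using assms by (intro cSUP_least) auto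

lemma fcont:
  fixes f :: "('a::topological_space \<Rightarrow> real) \<Rightarrow> ('a \<Rightarrow> real)"
  assumes cp: "compact \<Omega>" and y: "y \<in> \<Omega>" and K0: "0 \<le> K"
    and fc: "\<And>\<phi>. continuous_on \<Omega> \<phi> \<Longrightarrow> continuous_on \<Omega> (f \<phi>)"
    and KL: "\<And>\<phi> \<psi>. continuous_on \<Omega> \<phi> \<Longrightarrow> continuous_on \<Omega> \<psi> \<Longrightarrow>
        supnorm \<Omega> (\<lambda>x. f \<phi> x - f \<psi> x) \<le> K * supnorm \<Omega> (\<lambda>x. \<phi> x - \<psi> x)"
    and B: "cont_C \<Omega> T B"
  shows "continuous_on T (\<lambda>u. f (B u) y)"
  unfolding continuous_on_iff
proof (intro ballI allI impI)
  fix t e :: real assume t: "t \<in> T" and e: "0 < e"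
  have Bc: "\<And>s. s \<in> T \<Longrightarrow> continuous_on \<Omega> (B s)" using B unfolding cont_C_def by auto
  obtain d where d: "d > 0" "\<And>s. s \<in> T \<Longrightarrow> \<bar>s - t\<bar> < d \<Longrightarrow> supnorm \<Omega> (\<lambda>x. B s x - B t x) < e / (K+1)"
    using B t e K0 unfolding cont_C_def by (metis divide_pos_pos add_nonneg_pos zero_less_one)
  show "\<exists>d>0. \<forall>s\<in>T. dist s t < d \<longrightarrow> dist (f (B s) y) (f (B t) y) < e"
  proof (intro exI[of _ d] conjI ballI impI)
    fix s assume s: "s \<in> T" "dist s t < d"
    have "\<bar>f (B s) y - f (B t) y\<bar> \<le> supnorm \<Omega> (\<lambda>x. f (B s) x - f (B t) x)"
      using sn_ge[OF cp _ y, of "\<lambda>x. f (B s) x - f (B t) x"] fc Bc s t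
      by (auto intro: continuous_on_diff)
    also have "\<dots> \<le> K * supnorm \<Omega> (\<lambda>x. B s x - B t x)" using KL Bc s t by auto
    also have "\<dots> \<le> K * (e / (K+1))" 
      using d(2)[of s] s K0 by (intro mult_left_mono) (auto simp: dist_real_def)
    also have "\<dots> < e" using K0 e by (simp add: field_simps)
    finally show "dist (f (B s) y) (f (B t) y) < e" by (simp add: dist_real_def)
  qed (rule d(1))
qed



lemma lip_facts:
  fixes \<phi> :: "real \<Rightarrow> 'a::topological_space \<Rightarrow> real"
  assumes cp: "compact \<Omega>" and x0: "x0 \<in> \<Omega>" and L: "in_Lip_alpha \<Omega> \<alpha> \<phi>"
    and \<tau>c: "continuous_on \<Omega> \<tau>" and \<tau>p: "\<forall>x\<in>\<Omega>. 0 \<le> \<tau> x"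
    and N: "Lip_alpha_norm \<Omega> \<alpha> \<phi> + supnorm \<Omega> \<tau> \<le> M0"
  shows "\<forall>x\<in>\<Omega>. \<tau> x \<le> M0" "\<forall>s\<le>0. \<forall>y\<in>\<Omega>. \<bar>\<phi> s y\<bar> \<le> exp (\<alpha> * \<bar>s\<bar>) * M0"
proof -
  have \<phi>c: "\<And>s. s \<le> 0 \<Longrightarrow> continuous_on \<Omega> (\<phi> s)" using L unfolding in_Lip_alpha_def cont_C_def by auto
  have wc: "\<And>s::real. s \<le> 0 \<Longrightarrow> continuous_on \<Omega> (weighted \<alpha> \<phi> s)"
    unfolding weighted_def by (intro continuous_intros \<phi>c)
  have bdd1: "bdd_above ((\<lambda>t. supnorm \<Omega> (weighted \<alpha> \<phi> t)) ` {..0})" using L unfolding in_Lip_alpha_def by auto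
  obtain Kl where Kl: "\<forall>t\<le>0. \<forall>s\<le>0. supnorm \<Omega> (\<lambda>x. weighted \<alpha> \<phi> t x - weighted \<alpha> \<phi> s x) \<le> Kl * \<bar>t - s\<bar>"
    using L unfolding in_Lip_alpha_def by auto
  define S1 where "S1 = (SUP t\<in>{..0}. supnorm \<Omega> (weighted \<alpha> \<phi> t))"
  define Q where "Q = (\<lambda>p. supnorm \<Omega> (\<lambda>x. weighted \<alpha> \<phi> (fst p) x - weighted \<alpha> \<phi> (snd p) x)
          / \<bar>fst p - snd p\<bar>)"
  define P where "P = {(t, s). t \<le> (0::real) \<and> s \<le> 0 \<and> t \<noteq> s}"
  have LN: "Lip_alpha_norm \<Omega> \<alpha> \<phi> = S1 + (SUP p\<in>P. Q p)"
    unfolding Lip_alpha_norm_def S1_def Q_def P_def by simp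
  have "0 \<le> supnorm \<Omega> (weighted \<alpha> \<phi> 0)" using sn_nonneg[OF cp wc[of 0] x0] by simp
  then have S1p: "0 \<le> S1" unfolding S1_def by (intro cSUP_upper2[OF bdd1, of 0]) auto
  have bdd2: "bdd_above (Q ` P)"
  proof (rule bdd_aboveI2)
    fix p assume "p \<in> P"
    then obtain a b where p: "p = (a, b)" "a \<le> 0" "b \<le> 0" "a \<noteq> b" unfolding P_def by auto
    have "supnorm \<Omega> (\<lambda>x. weighted \<alpha> \<phi> a x - weighted \<alpha> \<phi> b x) \<le> Kl * \<bar>a - b\<bar>" using Kl p by auto
    then show "Q p \<le> Kl" using p unfolding Q_def by (simp add: pos_divide_le_eq)
  qed
  have "0 \<le> Q (0, -1)" unfolding Q_def
    using sn_nonneg[OF cp _ x0, of "\<lambda>x. weighted \<alpha> \<phi> 0 x - weighted \<alpha> \<phi> (-1) x"] wc[of 0] wc[of "-1"]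
    by (auto intro: continuous_on_diff)
  then have S2p: "0 \<le> (SUP p\<in>P. Q p)" by (intro cSUP_upper2[OF bdd2, of "(0,-1)"]) (auto simp: P_def)
  have snt: "0 \<le> supnorm \<Omega> \<tau>" using sn_nonneg[OF cp \<tau>c x0] .
  have S1M: "S1 \<le> M0" and stM: "supnorm \<Omega> \<tau> \<le> M0" using N LN S1p S2p snt by linarith+
  show "\<forall>x\<in>\<Omega>. \<tau> x \<le> M0"
    using sn_ge[OF cp \<tau>c] stM by fastforce
  show "\<forall>s\<le>0. \<forall>y\<in>\<Omega>. \<bar>\<phi> s y\<bar> \<le> exp (\<alpha> * \<bar>s\<bar>) * M0"
  proof (intro allI impI ballI)
    fix s :: real and y assume s: "s \<le> 0" and y: "y \<in> \<Omega>"
    have "\<bar>weighted \<alpha> \<phi> s y\<bar> \<le> supnorm \<Omega> (weighted \<alpha> \<phi> s)" using sn_ge[OF cp wc[OF s] y] .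
    also have "\<dots> \<le> S1" unfolding S1_def using s by (intro cSUP_upper[OF _ bdd1]) auto
    finally have w: "exp (- \<alpha> * \<bar>s\<bar>) * \<bar>\<phi> s y\<bar> \<le> M0" using S1M unfolding weighted_def by (simp add: abs_mult)
    have "\<bar>\<phi> s y\<bar> = exp (\<alpha> * \<bar>s\<bar>) * (exp (- \<alpha> * \<bar>s\<bar>) * \<bar>\<phi> s y\<bar>)"
      by (simp add: exp_minus field_simps)
    also have "\<dots> \<le> exp (\<alpha> * \<bar>s\<bar>) * M0" using w by (intro mult_left_mono) auto
    finally show "\<bar>\<phi> s y\<bar> \<le> exp (\<alpha> * \<bar>s\<bar>) * M0" .
  qed
qed

lemma A_bound:
  fixes A \<phi> :: "real \<Rightarrow> 'a::topological_space \<Rightarrow> real"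
  assumes cp: "compact \<Omega>" and \<alpha>: "0 \<le> \<alpha>" and M0: "0 < M0"
    and Ac: "cont_C \<Omega> {t. ereal t < r} A"
    and eq: "\<forall>t\<le>0. \<forall>x\<in>\<Omega>. A t x = \<phi> t x"
    and \<phi>b: "\<forall>s\<le>0. \<forall>y\<in>\<Omega>. \<bar>\<phi> s y\<bar> \<le> exp (\<alpha> * \<bar>s\<bar>) * M0"
    and bdd: "bdd_above ((\<lambda>t. supnorm \<Omega> (A t)) ` {t. 0 \<le> t \<and> ereal t < r})"
    and SM: "(SUP t\<in>{t. 0 \<le> t \<and> ereal t < r}. supnorm \<Omega> (A t)) \<le> M"
    and u: "- M0 \<le> u" "ereal u < r" and y: "y \<in> \<Omega>"
  shows "\<bar>A u y\<bar> \<le> max M (exp (\<alpha> * M0) * M0)"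
proof (cases "0 \<le> u")
  case True
  have "\<bar>A u y\<bar> \<le> supnorm \<Omega> (A u)" using Ac u y unfolding cont_C_def by (intro sn_ge[OF cp]) auto
  also have "\<dots> \<le> (SUP t\<in>{t. 0 \<le> t \<and> ereal t < r}. supnorm \<Omega> (A t))"
    using True u by (intro cSUP_upper[OF _ bdd]) auto
  finally show ?thesis using SM by linarith
next
  case False
  have "\<bar>A u y\<bar> = \<bar>\<phi> u y\<bar>" using eq False y by auto
  also have "\<dots> \<le> exp (\<alpha> * \<bar>u\<bar>) * M0" using \<phi>b False y by auto
  also have "\<dots> \<le> exp (\<alpha> * M0) * M0"
  proof -
    have "\<alpha> * \<bar>u\<bar> \<le> \<alpha> * M0" using False u \<alpha> by (intro mult_left_mono) auto
    then show ?thesis using M0 by (intro mult_right_mono) auto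
  qed
  finally show ?thesis by linarith
qed

lemma traj:
  fixes f :: "('a::topological_space \<Rightarrow> real) \<Rightarrow> ('a \<Rightarrow> real)" and A \<phi> :: "real \<Rightarrow> 'a \<Rightarrow> real"
  assumes cp: "compact \<Omega>" and x: "x \<in> \<Omega>" and K0: "0 \<le> K"
    and fc: "\<And>\<phi>. continuous_on \<Omega> \<phi> \<Longrightarrow> continuous_on \<Omega> (f \<phi>)"
    and KL: "\<And>\<phi> \<psi>. continuous_on \<Omega> \<phi> \<Longrightarrow> continuous_on \<Omega> \<psi> \<Longrightarrow>
        supnorm \<Omega> (\<lambda>x. f \<phi> x - f \<psi> x) \<le> K * supnorm \<Omega> (\<lambda>x. \<phi> x - \<psi> x)"
    and fp: "\<And>\<psi> y. continuous_on \<Omega> \<psi> \<Longrightarrow> y \<in> \<Omega> \<Longrightarrow> 0 < f \<psi> y"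
    and Ac: "cont_C \<Omega> {t. ereal t < r} A" and \<phi>c: "cont_C \<Omega> {..0} \<phi>"
    and eq: "\<forall>t\<le>0. \<forall>x\<in>\<Omega>. A t x = \<phi> t x"
    and t: "0 \<le> t" "ereal t < r" and \<tau>: "0 \<le> \<tau>0 x"
  shows "\<exists>\<sigma>. hat_tau f (seg A t) (\<lambda>x. integral {-\<tau>0 x..0} (\<lambda>s. f (\<phi> s) x)) x = \<sigma> \<and> 0 \<le> \<sigma> \<and>
    \<sigma> \<le> t + \<tau>0 x \<and> integral {t-\<sigma>..t} (\<lambda>u. f (A u) x) = integral {-\<tau>0 x..0} (\<lambda>s. f (\<phi> s) x)"
proof -
  define g where "g = (\<lambda>u. f (A u) x)"
  define d where "d = integral {-\<tau>0 x..0} (\<lambda>s. f (\<phi> s) x)"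
  have sub: "{..t} \<subseteq> {u. ereal u < r}"
  proof
    fix u assume "u \<in> {..t}"
    then have "ereal u \<le> ereal t" by simp
    then show "u \<in> {u. ereal u < r}" using order.strict_trans1[OF _ t(2)] by simp
  qed
  have gc: "continuous_on {..t} g" unfolding g_def
    using fcont[OF cp x K0 fc KL Ac] sub by (rule continuous_on_subset)
  have ur: "\<And>u. u \<le> t \<Longrightarrow> ereal u < r" using sub by auto
  have Acs: "\<And>u. u \<le> t \<Longrightarrow> continuous_on \<Omega> (A u)" using Ac ur unfolding cont_C_def by auto
  have \<phi>cs: "\<And>u. u \<le> 0 \<Longrightarrow> continuous_on \<Omega> (\<phi> u)" using \<phi>c unfolding cont_C_def by auto
  have gp: "\<And>u. u \<le> t \<Longrightarrow> 0 < g u" unfolding g_def using fp Acs x by auto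
  have geq: "g u = f (\<phi> u) x" if u: "u \<le> 0" for u
  proof -
    have ut: "u \<le> t" using u t by linarith
    have "\<bar>f (A u) x - f (\<phi> u) x\<bar> \<le> supnorm \<Omega> (\<lambda>x. f (A u) x - f (\<phi> u) x)"
      using sn_ge[OF cp _ x, of "\<lambda>x. f (A u) x - f (\<phi> u) x"] fc Acs[OF ut] \<phi>cs[OF u]
      by (auto intro: continuous_on_diff)
    also have "\<dots> \<le> K * supnorm \<Omega> (\<lambda>x. A u x - \<phi> u x)" using KL Acs[OF ut] \<phi>cs[OF u] by auto
    also have "\<dots> \<le> 0"
    proof -
      have "supnorm \<Omega> (\<lambda>x. A u x - \<phi> u x) \<le> 0" using eq u x by (intro sn_le) auto
      then show ?thesis using K0 by (simp add: mult_nonneg_nonpos)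
    qed
    finally show ?thesis unfolding g_def by simp
  qed
  have dI: "d = integral {-\<tau>0 x..0} g" unfolding d_def by (rule integral_cong) (simp add: geq)
  have gi: "\<And>a b. b \<le> t \<Longrightarrow> g integrable_on {a..b}"
    by (rule integrable_continuous_real, rule continuous_on_subset[OF gc]) auto
  have "integral {-\<tau>0 x..0} g + integral {0..t} g = integral {-\<tau>0 x..t} g"
    by (rule Henstock_Kurzweil_Integration.integral_combine) (use \<tau> t gi in auto)
  moreover have "0 \<le> integral {0..t} g" using gi gp by (intro integral_nonneg) (auto intro: less_imp_le)
  moreover have d0: "0 \<le> d" unfolding dI using gi gp t by (intro integral_nonneg) (auto intro: less_imp_le)
  ultimately have "d \<le> integral {-\<tau>0 x..t} g" using dI by linarith
  then obtain \<sigma> where \<sigma>: "0 \<le> \<sigma>" "\<sigma> \<le> t - - \<tau>0 x" "integral {t-\<sigma>..t} g = d"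
    using exist_sigma[OF gc, of "-\<tau>0 x" d] d0 \<tau> t by auto
  have shift: "integral {-s..0} (\<lambda>\<theta>. f (A (t+\<theta>)) x) = integral {t-s..t} g" for s
    using integral_shift_real_ivl[where f=g and a="t-s" and b=t and c=t] by (simp add: g_def add.commute)
  have "hat_tau f (seg A t) (\<lambda>x. integral {-\<tau>0 x..0} (\<lambda>s. f (\<phi> s) x)) x = \<sigma>"
    unfolding hat_tau_def seg_def shift d_def[symmetric]
    by (rule the_sigma[OF gc gp \<sigma>(1) \<sigma>(3)])
  then show ?thesis using \<sigma> unfolding g_def d_def by auto
qed



lemma delta_bounds:
  fixes f :: "('a::topological_space \<Rightarrow> real) \<Rightarrow> ('a \<Rightarrow> real)" and \<phi> :: "real \<Rightarrow> 'a \<Rightarrow> real"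
  assumes cp: "compact \<Omega>" and y: "y \<in> \<Omega>" and K0: "0 \<le> K"
    and fc: "\<And>\<phi>. continuous_on \<Omega> \<phi> \<Longrightarrow> continuous_on \<Omega> (f \<phi>)"
    and KL: "\<And>\<phi> \<psi>. continuous_on \<Omega> \<phi> \<Longrightarrow> continuous_on \<Omega> \<psi> \<Longrightarrow>
        supnorm \<Omega> (\<lambda>x. f \<phi> x - f \<psi> x) \<le> K * supnorm \<Omega> (\<lambda>x. \<phi> x - \<psi> x)"
    and fb: "\<And>\<psi> y. continuous_on \<Omega> \<psi> \<Longrightarrow> y \<in> \<Omega> \<Longrightarrow> 0 < f \<psi> y \<and> f \<psi> y \<le> Mf"
    and \<phi>c: "cont_C \<Omega> {..0} \<phi>" and \<tau>: "0 \<le> \<tau>" "\<tau> \<le> M0"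
  shows "0 \<le> integral {-\<tau>..0} (\<lambda>s. f (\<phi> s) y) \<and> integral {-\<tau>..0} (\<lambda>s. f (\<phi> s) y) \<le> Mf * M0"
proof -
  have Mf0: "0 \<le> Mf" using fb[of "\<lambda>_. 0" y] y by fastforce
  have \<phi>cs: "\<And>u. u \<le> 0 \<Longrightarrow> continuous_on \<Omega> (\<phi> u)" using \<phi>c unfolding cont_C_def by auto
  have gc: "continuous_on {..0} (\<lambda>s. f (\<phi> s) y)" by (rule fcont[OF cp y K0 fc KL \<phi>c])
  have gi: "(\<lambda>s. f (\<phi> s) y) integrable_on {-\<tau>..0}"
    by (rule integrable_continuous_real, rule continuous_on_subset[OF gc]) auto
  have "0 \<le> integral {-\<tau>..0} (\<lambda>s. f (\<phi> s) y)"
    using gi fb \<phi>cs y by (intro integral_nonneg) (auto intro: less_imp_le)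
  moreover have "integral {-\<tau>..0} (\<lambda>s. f (\<phi> s) y) \<le> Mf * (0 - - \<tau>)"
    by (rule int_upper[OF gi]) (use fb \<phi>cs y \<tau> in auto)
  moreover have "Mf * (0 - - \<tau>) \<le> Mf * M0" using Mf0 \<tau> by (intro mult_left_mono) auto
  ultimately show ?thesis by linarith
qed

definition fprops :: "'a::topological_space set \<Rightarrow> (('a \<Rightarrow> real) \<Rightarrow> ('a \<Rightarrow> real)) \<Rightarrow> real \<Rightarrow> real \<Rightarrow> bool" where
  "fprops \<Omega> f K Mf \<longleftrightarrow> 0 \<le> K \<and> (\<forall>\<phi>. continuous_on \<Omega> \<phi> \<longrightarrow> continuous_on \<Omega> (f \<phi>)) \<and>
    (\<forall>\<phi> \<psi>. continuous_on \<Omega> \<phi> \<longrightarrow> continuous_on \<Omega> \<psi> \<longrightarrow>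
        supnorm \<Omega> (\<lambda>x. f \<phi> x - f \<psi> x) \<le> K * supnorm \<Omega> (\<lambda>x. \<phi> x - \<psi> x)) \<and>
    (\<forall>\<psi> y. continuous_on \<Omega> \<psi> \<longrightarrow> y \<in> \<Omega> \<longrightarrow> 0 < f \<psi> y \<and> f \<psi> y \<le> Mf)"

lemma fcont':
  assumes "fprops \<Omega> f K Mf" "compact \<Omega>" "y \<in> \<Omega>" "cont_C \<Omega> T B"
  shows "continuous_on T (\<lambda>u. f (B u) y)"
  using assms unfolding fprops_def by (intro fcont[of \<Omega> y K f]) auto

lemma delta_bounds':
  fixes f :: "('a::topological_space \<Rightarrow> real) \<Rightarrow> ('a \<Rightarrow> real)" and \<phi> :: "real \<Rightarrow> 'a \<Rightarrow> real"
  assumes "fprops \<Omega> f K Mf" "compact \<Omega>" "y \<in> \<Omega>" "cont_C \<Omega> {..0} \<phi>" "0 \<le> \<tau>" "\<tau> \<le> M0"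
  shows "0 \<le> integral {-\<tau>..0} (\<lambda>s. f (\<phi> s) y) \<and> integral {-\<tau>..0} (\<lambda>s. f (\<phi> s) y) \<le> Mf * M0"
  using assms unfolding fprops_def by (intro delta_bounds[of \<Omega> y K f Mf]) auto

lemma traj':
  fixes f :: "('a::topological_space \<Rightarrow> real) \<Rightarrow> ('a \<Rightarrow> real)" and A \<phi> :: "real \<Rightarrow> 'a \<Rightarrow> real"
  assumes "fprops \<Omega> f K Mf" "compact \<Omega>" "x \<in> \<Omega>"
    and "cont_C \<Omega> {t. ereal t < r} A" and "cont_C \<Omega> {..0} \<phi>"
    and "\<forall>t\<le>0. \<forall>x\<in>\<Omega>. A t x = \<phi> t x"
    and "0 \<le> t" "ereal t < r" and "0 \<le> \<tau>0 x"
  shows "\<exists>\<sigma>. hat_tau f (seg A t) (\<lambda>x. integral {-\<tau>0 x..0} (\<lambda>s. f (\<phi> s) x)) x = \<sigma> \<and> 0 \<le> \<sigma> \<and>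
    \<sigma> \<le> t + \<tau>0 x \<and> integral {t-\<sigma>..t} (\<lambda>u. f (A u) x) = integral {-\<tau>0 x..0} (\<lambda>s. f (\<phi> s) x)"
  using assms unfolding fprops_def by (intro traj[of \<Omega> x K f]) auto


theorem lemma3p9:
  fixes \<Omega> :: "'a::euclidean_space set"
    and f :: "('a \<Rightarrow> real) \<Rightarrow> ('a \<Rightarrow> real)"
    and \<alpha> :: real
  assumes "compact \<Omega>"
    and "\<alpha> \<ge> 0"
    and "admissible_f \<Omega> f"
  shows "\<forall>M0 > 0. \<forall>M :: real. \<exists>L\<tau> > 0.
    \<forall>(r :: ereal) \<phi> \<phi>' (\<tau>0 :: 'a \<Rightarrow> real) \<tau>0' A A'.
      r > 0 \<longrightarrow>
      in_Lip_alpha \<Omega> \<alpha> \<phi> \<longrightarrow> in_Lip_alpha \<Omega> \<alpha> \<phi>' \<longrightarrow>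
      continuous_on \<Omega> \<tau>0 \<longrightarrow> (\<forall>x\<in>\<Omega>. 0 \<le> \<tau>0 x) \<longrightarrow>
      continuous_on \<Omega> \<tau>0' \<longrightarrow> (\<forall>x\<in>\<Omega>. 0 \<le> \<tau>0' x) \<longrightarrow>
      Lip_alpha_norm \<Omega> \<alpha> \<phi> + supnorm \<Omega> \<tau>0 \<le> M0 \<longrightarrow>
      Lip_alpha_norm \<Omega> \<alpha> \<phi>' + supnorm \<Omega> \<tau>0' \<le> M0 \<longrightarrow>
      cont_C \<Omega> {t. ereal t < r} A \<longrightarrow> cont_C \<Omega> {t. ereal t < r} A' \<longrightarrow>
      (\<forall>t\<le>0. \<forall>x\<in>\<Omega>. A t x = \<phi> t x) \<longrightarrow>
      (\<forall>t\<le>0. \<forall>x\<in>\<Omega>. A' t x = \<phi>' t x) \<longrightarrow>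
      bdd_above ((\<lambda>t. supnorm \<Omega> (A t)) ` {t. 0 \<le> t \<and> ereal t < r}) \<longrightarrow>
      bdd_above ((\<lambda>t. supnorm \<Omega> (A' t)) ` {t. 0 \<le> t \<and> ereal t < r}) \<longrightarrow>
      M = max (SUP t\<in>{t. 0 \<le> t \<and> ereal t < r}. supnorm \<Omega> (A t))
              (SUP t\<in>{t. 0 \<le> t \<and> ereal t < r}. supnorm \<Omega> (A' t)) \<longrightarrow>
      (let \<delta>0 = (\<lambda>x. integral {- \<tau>0 x..0} (\<lambda>s. f (\<phi> s) x));
           \<delta>0' = (\<lambda>x. integral {- \<tau>0' x..0} (\<lambda>s. f (\<phi>' s) x));
           taubar = max (SUP x\<in>\<Omega>. \<tau>0 x) (SUP x\<in>\<Omega>. \<tau>0' x)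
       in \<forall>t x. 0 \<le> t \<longrightarrow> ereal t < r \<longrightarrow> x \<in> \<Omega> \<longrightarrow>
            \<bar>hat_tau f (seg A t) \<delta>0 x - hat_tau f (seg A' t) \<delta>0' x\<bar>
              \<le> L\<tau> * ((SUP s\<in>{s. - taubar \<le> s \<and> ereal s < r}.
                          supnorm \<Omega> (\<lambda>y. A s y - A' s y))
                       + supnorm \<Omega> (\<lambda>y. \<delta>0 y - \<delta>0' y)))"
proof -
  have adm: "admissible_f \<Omega> f" by (rule assms(3))
  have fc: "\<And>\<phi>. continuous_on \<Omega> \<phi> \<Longrightarrow> continuous_on \<Omega> (f \<phi>)"
    using adm unfolding admissible_f_def by blast
  obtain K0 where KL0: "\<And>\<phi> \<psi>. continuous_on \<Omega> \<phi> \<Longrightarrow> continuous_on \<Omega> \<psi> \<Longrightarrow>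
        supnorm \<Omega> (\<lambda>x. f \<phi> x - f \<psi> x) \<le> K0 * supnorm \<Omega> (\<lambda>x. \<phi> x - \<psi> x)"
    using adm unfolding admissible_f_def by blast
  obtain Mf where fb: "\<And>\<psi> y. continuous_on \<Omega> \<psi> \<Longrightarrow> y \<in> \<Omega> \<Longrightarrow> 0 < f \<psi> y \<and> f \<psi> y \<le> Mf"
    using adm unfolding admissible_f_def by blast
  have mono: "\<And>\<phi> \<psi> y. continuous_on \<Omega> \<phi> \<Longrightarrow> continuous_on \<Omega> \<psi> \<Longrightarrow> (\<forall>x\<in>\<Omega>. \<phi> x \<le> \<psi> x)
      \<Longrightarrow> y \<in> \<Omega> \<Longrightarrow> f \<psi> y \<le> f \<phi> y"
    using adm unfolding admissible_f_def by blast
  show ?thesis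
  proof (cases "\<Omega> = {}")
    case True
    then show ?thesis by (intro allI impI exI[of _ 1]) (simp add: Let_def)
  next
    case False
    then obtain x0 where x0: "x0 \<in> \<Omega>" by auto
    define K where "K = max K0 0"
    have K0: "0 \<le> K" by (simp add: K_def)
    have KL: "supnorm \<Omega> (\<lambda>x. f \<phi> x - f \<psi> x) \<le> K * supnorm \<Omega> (\<lambda>x. \<phi> x - \<psi> x)"
      if "continuous_on \<Omega> \<phi>" "continuous_on \<Omega> \<psi>" for \<phi> \<psi>
    proof -
      have "0 \<le> supnorm \<Omega> (\<lambda>x. \<phi> x - \<psi> x)"
        using sn_nonneg[OF assms(1) _ x0, of "\<lambda>x. \<phi> x - \<psi> x"] that by (auto intro: continuous_on_diff)
      then have "K0 * supnorm \<Omega> (\<lambda>x. \<phi> x - \<psi> x) \<le> K * supnorm \<Omega> (\<lambda>x. \<phi> x - \<psi> x)"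
        unfolding K_def by (intro mult_right_mono) auto
      then show ?thesis using KL0[OF that] by linarith
    qed
    have fp: "\<And>\<psi> y. continuous_on \<Omega> \<psi> \<Longrightarrow> y \<in> \<Omega> \<Longrightarrow> 0 < f \<psi> y" using fb by blast
    have Mf0: "0 \<le> Mf" using fb[of "\<lambda>_. 0" x0] x0 by fastforce
    have FP: "fprops \<Omega> f K Mf" unfolding fprops_def using K0 fc KL fb by blast
    show ?thesis
    proof (intro allI impI)
      fix M0 M :: real assume M0: "0 < M0"
      define C where "C = max M (exp (\<alpha> * M0) * M0)"
      have Cc: "continuous_on \<Omega> (\<lambda>_::'a. C)" by simp
      obtain y0 where y0: "y0 \<in> \<Omega>" "\<And>y. y \<in> \<Omega> \<Longrightarrow> f (\<lambda>_. C) y0 \<le> f (\<lambda>_. C) y"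
        using continuous_attains_inf[OF assms(1) False fc[OF Cc]] by blast
      define m where "m = f (\<lambda>_. C) y0"
      have m0: "0 < m" unfolding m_def using fp[OF Cc y0(1)] .
      have mle: "\<And>y. y \<in> \<Omega> \<Longrightarrow> m \<le> f (\<lambda>_. C) y" unfolding m_def using y0 by blast
      define X where "X = K * Mf * M0 / m"
      have X0: "0 \<le> X" unfolding X_def using K0 Mf0 M0 m0 by simp
      define L where "L = (1 + X) / m"
      have L0: "0 < L" unfolding L_def using X0 m0 by simp
      show "\<exists>L\<tau>>0. \<forall>(r :: ereal) \<phi> \<phi>' (\<tau>0 :: 'a \<Rightarrow> real) \<tau>0' A A'.
      r > 0 \<longrightarrow>
      in_Lip_alpha \<Omega> \<alpha> \<phi> \<longrightarrow> in_Lip_alpha \<Omega> \<alpha> \<phi>' \<longrightarrow>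
      continuous_on \<Omega> \<tau>0 \<longrightarrow> (\<forall>x\<in>\<Omega>. 0 \<le> \<tau>0 x) \<longrightarrow>
      continuous_on \<Omega> \<tau>0' \<longrightarrow> (\<forall>x\<in>\<Omega>. 0 \<le> \<tau>0' x) \<longrightarrow>
      Lip_alpha_norm \<Omega> \<alpha> \<phi> + supnorm \<Omega> \<tau>0 \<le> M0 \<longrightarrow>
      Lip_alpha_norm \<Omega> \<alpha> \<phi>' + supnorm \<Omega> \<tau>0' \<le> M0 \<longrightarrow>
      cont_C \<Omega> {t. ereal t < r} A \<longrightarrow> cont_C \<Omega> {t. ereal t < r} A' \<longrightarrow>
      (\<forall>t\<le>0. \<forall>x\<in>\<Omega>. A t x = \<phi> t x) \<longrightarrow>
      (\<forall>t\<le>0. \<forall>x\<in>\<Omega>. A' t x = \<phi>' t x) \<longrightarrow>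
      bdd_above ((\<lambda>t. supnorm \<Omega> (A t)) ` {t. 0 \<le> t \<and> ereal t < r}) \<longrightarrow>
      bdd_above ((\<lambda>t. supnorm \<Omega> (A' t)) ` {t. 0 \<le> t \<and> ereal t < r}) \<longrightarrow>
      M = max (SUP t\<in>{t. 0 \<le> t \<and> ereal t < r}. supnorm \<Omega> (A t))
              (SUP t\<in>{t. 0 \<le> t \<and> ereal t < r}. supnorm \<Omega> (A' t)) \<longrightarrow>
      (let \<delta>0 = (\<lambda>x. integral {- \<tau>0 x..0} (\<lambda>s. f (\<phi> s) x));
           \<delta>0' = (\<lambda>x. integral {- \<tau>0' x..0} (\<lambda>s. f (\<phi>' s) x));
           taubar = max (SUP x\<in>\<Omega>. \<tau>0 x) (SUP x\<in>\<Omega>. \<tau>0' x)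
       in \<forall>t x. 0 \<le> t \<longrightarrow> ereal t < r \<longrightarrow> x \<in> \<Omega> \<longrightarrow>
            \<bar>hat_tau f (seg A t) \<delta>0 x - hat_tau f (seg A' t) \<delta>0' x\<bar>
              \<le> L\<tau> * ((SUP s\<in>{s. - taubar \<le> s \<and> ereal s < r}.
                          supnorm \<Omega> (\<lambda>y. A s y - A' s y))
                       + supnorm \<Omega> (\<lambda>y. \<delta>0 y - \<delta>0' y)))"
      proof (intro exI[of _ L] conjI allI impI)
        show "0 < L" by (rule L0)
      next
        fix r :: ereal and \<phi> \<phi>' :: "real \<Rightarrow> 'a \<Rightarrow> real" and \<tau>0 \<tau>0' :: "'a \<Rightarrow> real"
          and A A' :: "real \<Rightarrow> 'a \<Rightarrow> real"
        assume r: "r > 0"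
          and L1: "in_Lip_alpha \<Omega> \<alpha> \<phi>" and L2: "in_Lip_alpha \<Omega> \<alpha> \<phi>'"
          and \<tau>c: "continuous_on \<Omega> \<tau>0" and \<tau>p: "\<forall>x\<in>\<Omega>. 0 \<le> \<tau>0 x"
          and \<tau>c': "continuous_on \<Omega> \<tau>0'" and \<tau>p': "\<forall>x\<in>\<Omega>. 0 \<le> \<tau>0' x"
          and N1: "Lip_alpha_norm \<Omega> \<alpha> \<phi> + supnorm \<Omega> \<tau>0 \<le> M0"
          and N2: "Lip_alpha_norm \<Omega> \<alpha> \<phi>' + supnorm \<Omega> \<tau>0' \<le> M0"
          and Ac: "cont_C \<Omega> {t. ereal t < r} A" and Ac': "cont_C \<Omega> {t. ereal t < r} A'"
          and eqA: "\<forall>t\<le>0. \<forall>x\<in>\<Omega>. A t x = \<phi> t x"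
          and eqA': "\<forall>t\<le>0. \<forall>x\<in>\<Omega>. A' t x = \<phi>' t x"
          and bddA: "bdd_above ((\<lambda>t. supnorm \<Omega> (A t)) ` {t. 0 \<le> t \<and> ereal t < r})"
          and bddA': "bdd_above ((\<lambda>t. supnorm \<Omega> (A' t)) ` {t. 0 \<le> t \<and> ereal t < r})"
          and Mdef: "M = max (SUP t\<in>{t. 0 \<le> t \<and> ereal t < r}. supnorm \<Omega> (A t))
              (SUP t\<in>{t. 0 \<le> t \<and> ereal t < r}. supnorm \<Omega> (A' t))"
        define \<delta>0 where "\<delta>0 = (\<lambda>x. integral {- \<tau>0 x..0} (\<lambda>s. f (\<phi> s) x))"
        define \<delta>0' where "\<delta>0' = (\<lambda>x. integral {- \<tau>0' x..0} (\<lambda>s. f (\<phi>' s) x))"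
        define taubar where "taubar = max (SUP x\<in>\<Omega>. \<tau>0 x) (SUP x\<in>\<Omega>. \<tau>0' x)"
        define Dset where "Dset = {s. - taubar \<le> s \<and> ereal s < r}"
        define D where "D = (SUP s\<in>Dset. supnorm \<Omega> (\<lambda>y. A s y - A' s y))"
        define S where "S = supnorm \<Omega> (\<lambda>y. \<delta>0 y - \<delta>0' y)"
        note lf1 = lip_facts[OF assms(1) x0 L1 \<tau>c \<tau>p N1]
        note lf2 = lip_facts[OF assms(1) x0 L2 \<tau>c' \<tau>p' N2]
        have \<phi>c: "cont_C \<Omega> {..0} \<phi>" using L1 unfolding in_Lip_alpha_def by auto
        have \<phi>c': "cont_C \<Omega> {..0} \<phi>'" using L2 unfolding in_Lip_alpha_def by auto
        have SA: "(SUP t\<in>{t. 0 \<le> t \<and> ereal t < r}. supnorm \<Omega> (A t)) \<le> M" using Mdef by simp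
        have SA': "(SUP t\<in>{t. 0 \<le> t \<and> ereal t < r}. supnorm \<Omega> (A' t)) \<le> M" using Mdef by simp
        have Ab: "\<And>u y. - M0 \<le> u \<Longrightarrow> ereal u < r \<Longrightarrow> y \<in> \<Omega> \<Longrightarrow> \<bar>A u y\<bar> \<le> C"
          unfolding C_def by (rule A_bound[OF assms(1) assms(2) M0 Ac eqA lf1(2) bddA SA])
        have Ab': "\<And>u y. - M0 \<le> u \<Longrightarrow> ereal u < r \<Longrightarrow> y \<in> \<Omega> \<Longrightarrow> \<bar>A' u y\<bar> \<le> C"
          unfolding C_def by (rule A_bound[OF assms(1) assms(2) M0 Ac' eqA' lf2(2) bddA' SA'])
        have Acs: "\<And>u. ereal u < r \<Longrightarrow> continuous_on \<Omega> (A u)" using Ac unfolding cont_C_def by auto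
        have Acs': "\<And>u. ereal u < r \<Longrightarrow> continuous_on \<Omega> (A' u)" using Ac' unfolding cont_C_def by auto
        have low: "m \<le> f (A u) y" if "- M0 \<le> u" "ereal u < r" "y \<in> \<Omega>" for u y
        proof -
          have "f (\<lambda>_. C) y \<le> f (A u) y"
            using Ab[OF that(1,2)] that by (intro mono[OF Acs Cc]) (auto simp: abs_le_iff)
          then show ?thesis using mle[OF that(3)] by linarith
        qed
        have low': "m \<le> f (A' u) y" if "- M0 \<le> u" "ereal u < r" "y \<in> \<Omega>" for u y
        proof -
          have "f (\<lambda>_. C) y \<le> f (A' u) y"
            using Ab'[OF that(1,2)] that by (intro mono[OF Acs' Cc]) (auto simp: abs_le_iff)
          then show ?thesis using mle[OF that(3)] by linarith
        qed
        have bt1: "bdd_above (\<tau>0 ` \<Omega>)" using lf1(1) by (intro bdd_aboveI2) auto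
        have bt2: "bdd_above (\<tau>0' ` \<Omega>)" using lf2(1) by (intro bdd_aboveI2) auto
        have \<tau>le: "\<tau>0 y \<le> taubar" if "y \<in> \<Omega>" for y
          using cSUP_upper[OF that bt1] unfolding taubar_def by linarith
        have \<tau>le': "\<tau>0' y \<le> taubar" if "y \<in> \<Omega>" for y
          using cSUP_upper[OF that bt2] unfolding taubar_def by linarith
        have tbM: "taubar \<le> M0" unfolding taubar_def
          using lf1(1) lf2(1) False by (auto intro!: cSUP_least)
        have bddD: "bdd_above ((\<lambda>s. supnorm \<Omega> (\<lambda>y. A s y - A' s y)) ` Dset)"
        proof (rule bdd_aboveI2)
          fix s assume "s \<in> Dset"
          then have s: "- M0 \<le> s" "ereal s < r" unfolding Dset_def using tbM by auto
          show "supnorm \<Omega> (\<lambda>y. A s y - A' s y) \<le> 2 * C"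
          proof (rule sn_le[OF False])
            fix y assume y: "y \<in> \<Omega>"
            show "\<bar>A s y - A' s y\<bar> \<le> 2 * C"
              using Ab[OF s y] Ab'[OF s y] abs_triangle_ineq4[of "A s y" "A' s y"] by linarith
          qed
        qed
        have Dge: "\<And>s. s \<in> Dset \<Longrightarrow> supnorm \<Omega> (\<lambda>y. A s y - A' s y) \<le> D"
          unfolding D_def by (rule cSUP_upper[OF _ bddD])
        have Egap: "\<bar>f (A u) y - f (A' u) y\<bar> \<le> K * D" if u: "u \<in> Dset" and y: "y \<in> \<Omega>" for u y
        proof -
          have ur: "ereal u < r" using u unfolding Dset_def by auto
          have "\<bar>f (A u) y - f (A' u) y\<bar> \<le> supnorm \<Omega> (\<lambda>x. f (A u) x - f (A' u) x)"
            using sn_ge[OF assms(1) _ y, of "\<lambda>x. f (A u) x - f (A' u) x"] fc Acs[OF ur] Acs'[OF ur]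
            by (auto intro: continuous_on_diff)
          also have "\<dots> \<le> K * supnorm \<Omega> (\<lambda>x. A u x - A' u x)" using KL Acs[OF ur] Acs'[OF ur] by auto
          also have "\<dots> \<le> K * D" using Dge[OF u] K0 by (intro mult_left_mono) auto
          finally show ?thesis .
        qed
        have db1: "0 \<le> \<delta>0 y \<and> \<delta>0 y \<le> Mf * M0" if "y \<in> \<Omega>" for y
        proof -
          have "0 \<le> \<tau>0 y" "\<tau>0 y \<le> M0" using \<tau>p lf1(1) that by auto
          then show ?thesis unfolding \<delta>0_def by (rule delta_bounds'[OF FP assms(1) that \<phi>c])
        qed
        have db2: "0 \<le> \<delta>0' y \<and> \<delta>0' y \<le> Mf * M0" if "y \<in> \<Omega>" for y
        proof -
          have "0 \<le> \<tau>0' y" "\<tau>0' y \<le> M0" using \<tau>p' lf2(1) that by auto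
          then show ?thesis unfolding \<delta>0'_def by (rule delta_bounds'[OF FP assms(1) that \<phi>c'])
        qed
        have bddS: "bdd_above ((\<lambda>y. \<bar>\<delta>0 y - \<delta>0' y\<bar>) ` \<Omega>)"
        proof (rule bdd_aboveI2)
          fix y assume y: "y \<in> \<Omega>"
          show "\<bar>\<delta>0 y - \<delta>0' y\<bar> \<le> Mf * M0" unfolding abs_le_iff using db1[OF y] db2[OF y] by linarith
        qed
        have Sge: "\<And>y. y \<in> \<Omega> \<Longrightarrow> \<bar>\<delta>0 y - \<delta>0' y\<bar> \<le> S"
          unfolding S_def supnorm_def by (rule cSUP_upper[OF _ bddS])
        have main: "\<forall>t x. 0 \<le> t \<longrightarrow> ereal t < r \<longrightarrow> x \<in> \<Omega> \<longrightarrow>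
            \<bar>hat_tau f (seg A t) \<delta>0 x - hat_tau f (seg A' t) \<delta>0' x\<bar> \<le> L * (D + S)"
        proof (intro allI impI)
          fix t x assume t0: "0 \<le> t" and tr: "ereal t < r" and x: "x \<in> \<Omega>"
          obtain \<sigma> where h\<sigma>: "hat_tau f (seg A t) \<delta>0 x = \<sigma>" "0 \<le> \<sigma>" "\<sigma> \<le> t + \<tau>0 x"
              "integral {t-\<sigma>..t} (\<lambda>u. f (A u) x) = \<delta>0 x"
            using traj'[OF FP assms(1) x Ac \<phi>c eqA t0 tr, of \<tau>0] \<tau>p x unfolding \<delta>0_def by auto
          obtain \<sigma>' where h\<sigma>': "hat_tau f (seg A' t) \<delta>0' x = \<sigma>'" "0 \<le> \<sigma>'" "\<sigma>' \<le> t + \<tau>0' x"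
              "integral {t-\<sigma>'..t} (\<lambda>u. f (A' u) x) = \<delta>0' x"
            using traj'[OF FP assms(1) x Ac' \<phi>c' eqA' t0 tr, of \<tau>0'] \<tau>p' x unfolding \<delta>0'_def by auto
          define g where "g = (\<lambda>u. f (A u) x)"
          define g' where "g' = (\<lambda>u. f (A' u) x)"
          have ur: "ereal u < r" if "u \<le> t" for u
          proof -
            have "ereal u \<le> ereal t" using that by simp
            then show ?thesis using order.strict_trans1[OF _ tr] by simp
          qed
          have gc: "continuous_on {t-s..t} g" for s
            unfolding g_def using fcont'[OF FP assms(1) x Ac]
            by (rule continuous_on_subset) (auto intro: ur)
          have gc': "continuous_on {t-s..t} g'" for s
            unfolding g'_def using fcont'[OF FP assms(1) x Ac']
            by (rule continuous_on_subset) (auto intro: ur)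
          have tx: "\<tau>0 x \<le> M0" "\<tau>0' x \<le> M0" using lf1(1) lf2(1) x by auto
          have lg: "m \<le> g u" if "u \<in> {t-\<sigma>..t}" for u
            unfolding g_def using that h\<sigma>(3) tx x by (intro low) (auto intro: ur)
          have lg': "m \<le> g' u" if "u \<in> {t-\<sigma>'..t}" for u
            unfolding g'_def using that h\<sigma>'(3) tx x by (intro low') (auto intro: ur)
          have "m * (t - (t - \<sigma>)) \<le> integral {t-\<sigma>..t} g"
            by (rule int_lower) (use gc[of \<sigma>] integrable_continuous_real h\<sigma>(2) lg in auto)
          then have s1: "m * \<sigma> \<le> Mf * M0" using h\<sigma>(4) db1[OF x] unfolding g_def by simp
          have "m * (t - (t - \<sigma>')) \<le> integral {t-\<sigma>'..t} g'"
            by (rule int_lower) (use gc'[of \<sigma>'] integrable_continuous_real h\<sigma>'(2) lg' in auto)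
          then have s2: "m * \<sigma>' \<le> Mf * M0" using h\<sigma>'(4) db2[OF x] unfolding g'_def by simp
          have tb0: "0 \<le> taubar" using \<tau>le[OF x] \<tau>p x by force
          have tD: "t \<in> Dset" unfolding Dset_def using t0 tb0 tr by auto
          have D0: "0 \<le> D"
          proof -
            have "continuous_on \<Omega> (\<lambda>y. A t y - A' t y)"
              using Acs[OF tr] Acs'[OF tr] by (rule continuous_on_diff)
            then show ?thesis using Dge[OF tD] sn_nonneg[OF assms(1) _ x, of "\<lambda>y. A t y - A' t y"] by linarith
          qed
          have S0: "\<bar>\<delta>0 x - \<delta>0' x\<bar> \<le> S" using Sge[OF x] .
          have E: "\<bar>g u - g' u\<bar> \<le> K * D" if "u \<in> {t - min \<sigma> \<sigma>'..t}" for u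
          proof -
            have "u \<in> Dset" unfolding Dset_def using that h\<sigma>(3) h\<sigma>'(3) \<tau>le[OF x] \<tau>le'[OF x]
              by (auto intro: ur)
            then show ?thesis unfolding g_def g'_def using Egap x by auto
          qed
          have KD0: "0 \<le> K * D" using K0 D0 by simp
          have key: "m * \<bar>\<sigma> - \<sigma>'\<bar> \<le> \<bar>\<delta>0 x - \<delta>0' x\<bar> + K * D * (Mf * M0 / m)"
          proof (cases "\<sigma>' \<le> \<sigma>")
            case True
            have "m * (\<sigma> - \<sigma>') \<le> (\<delta>0 x - \<delta>0' x) + K * D * \<sigma>'"
              by (rule est_ordered[OF h\<sigma>'(2) True gc gc'])
                 (use h\<sigma>(4) h\<sigma>'(4) lg E True in \<open>auto simp: g_def g'_def min_def\<close>)
            moreover have "K * D * \<sigma>' \<le> K * D * (Mf * M0 / m)"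
              using s2 m0 KD0 by (intro mult_left_mono) (auto simp: pos_le_divide_eq mult.commute)
            ultimately show ?thesis using True by (simp add: abs_if)
          next
            case False
            have "m * (\<sigma>' - \<sigma>) \<le> (\<delta>0' x - \<delta>0 x) + K * D * \<sigma>"
              by (rule est_ordered[OF h\<sigma>(2) _ gc' gc])
                 (use h\<sigma>(4) h\<sigma>'(4) lg' E False in \<open>auto simp: g_def g'_def min_def abs_minus_commute\<close>)
            moreover have "K * D * \<sigma> \<le> K * D * (Mf * M0 / m)"
              using s1 m0 KD0 by (intro mult_left_mono) (auto simp: pos_le_divide_eq mult.commute)
            ultimately show ?thesis using False by (simp add: abs_if)
          qed
          have "K * D * (Mf * M0 / m) = X * D" unfolding X_def by simp
          then have "m * \<bar>\<sigma> - \<sigma>'\<bar> \<le> S + X * D" using key S0 by linarith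
          also have "\<dots> \<le> (1 + X) * (D + S)" using X0 D0 S0 by (simp add: algebra_simps)
          finally have "\<bar>\<sigma> - \<sigma>'\<bar> \<le> (1 + X) * (D + S) / m" using m0 by (simp add: pos_le_divide_eq mult.commute)
          then show "\<bar>hat_tau f (seg A t) \<delta>0 x - hat_tau f (seg A' t) \<delta>0' x\<bar> \<le> L * (D + S)"
            unfolding h\<sigma>(1) h\<sigma>'(1) L_def by simp
        qed
        show "let \<delta>0 = (\<lambda>x. integral {- \<tau>0 x..0} (\<lambda>s. f (\<phi> s) x));
           \<delta>0' = (\<lambda>x. integral {- \<tau>0' x..0} (\<lambda>s. f (\<phi>' s) x));
           taubar = max (SUP x\<in>\<Omega>. \<tau>0 x) (SUP x\<in>\<Omega>. \<tau>0' x)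
       in \<forall>t x. 0 \<le> t \<longrightarrow> ereal t < r \<longrightarrow> x \<in> \<Omega> \<longrightarrow>
            \<bar>hat_tau f (seg A t) \<delta>0 x - hat_tau f (seg A' t) \<delta>0' x\<bar>
              \<le> L * ((SUP s\<in>{s. - taubar \<le> s \<and> ereal s < r}.
                          supnorm \<Omega> (\<lambda>y. A s y - A' s y))
                       + supnorm \<Omega> (\<lambda>y. \<delta>0 y - \<delta>0' y))"
          unfolding Let_def using main unfolding \<delta>0_def \<delta>0'_def D_def S_def Dset_def taubar_def .
      qed
    qed
  qed
qed


end
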